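(* Let $(A,\cdot)$ and $(B,\circ)$ be nearly associative algebras over a field $\mathbb{K}$ of characteristic $0$. Suppose $(l_A,r_A,B)$ is a bimodule of $(A,\cdot)$ and $(l_B,r_B,A)$ is a bimodule of $(B,\circ)$, where $l_A,r_A:A\to\mathrm{End}(B)$ and $l_B,r_B:B\to\mathrm{End}(A)$ are linear maps satisfying, for all $x,y\in A$ and $a,b\in B$: \begin{align*} &r_B(l_A(x)a)y+y\cdot(r_B(a)x)-(l_B(a)y)\cdot x-l_B(r_A(y)a)x=0,\\ &r_B(a)(x\cdot y)-y\cdot(l_B(a)x)-r_B(r_A(x)a)y=0,\\ &l_B(a)(x\cdot y)-(r_B(a)y)\cdot x-l_B(l_A(y)a)x=0,\\ &r_A(l_B(a)x)b+b\circ(r_A(x)a)-(l_A(x)b)\circ a-l_A(r_B(b)x)a=0,\\ &r_A(x)(a\circ b)-b\circ(l_A(x)a)-r_A(r_B(a)x)b=0,\\ &l_A(x)(a\circ b)-(r_A(x)b)\circ a-l_A(l_B(b)x)a=0. \end{align*} Then $(A\oplus B,\ast)$ is a nearly associative algebra, where $(x+a)\ast(y+b)=(x\cdot y+l_B(a)y+r_B(b)x)+(a\circ b+l_A(x)b+r_A(y)a)$ for all $x,y\in A$, $a,b\in B$.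
   Context: An algebra $(A,\cdot)$ is nearly associative if $x\cdot(y\cdot z)=(z\cdot x)\cdot y$ for all $x,y,z\in A$. A triple $(l,r,V)$, with $V$ a linear space and $l,r:A\to\mathrm{End}(V)$ linear, is a bimodule of $(A,\cdot)$ if for all $x,y\in A$: $l(x)l(y)=r(y)r(x)$, $l(x)r(y)=l(y\cdot x)$, and $r(x)l(y)=r(x\cdot y)$. *)

theory Defs
  imports "HOL-Analysis.Analysis"
begin

definition bilinear_op :: "('k::field \<Rightarrow> 'v::ab_group_add \<Rightarrow> 'v) \<Rightarrow> ('v \<Rightarrow> 'v \<Rightarrow> 'v) \<Rightarrow> bool" where
  "bilinear_op s m \<longleftrightarrow> (\<forall>x. Vector_Spaces.linear s s (m x)) \<and> (\<forall>y. Vector_Spaces.linear s s (\<lambda>x. m x y))"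

definition nearly_assoc_algebra :: "('k::field \<Rightarrow> 'v::ab_group_add \<Rightarrow> 'v) \<Rightarrow> ('v \<Rightarrow> 'v \<Rightarrow> 'v) \<Rightarrow> bool" where
  "nearly_assoc_algebra s m \<longleftrightarrow> vector_space s \<and> bilinear_op s m \<and>
     (\<forall>x y z. m x (m y z) = m (m z x) y)"

definition linear_to_End :: "('k::field \<Rightarrow> 'a::ab_group_add \<Rightarrow> 'a) \<Rightarrow> ('k \<Rightarrow> 'v::ab_group_add \<Rightarrow> 'v) \<Rightarrow> ('a \<Rightarrow> 'v \<Rightarrow> 'v) \<Rightarrow> bool" where
  "linear_to_End sA sV l \<longleftrightarrow> (\<forall>x. Vector_Spaces.linear sV sV (l x)) \<and> (\<forall>v. Vector_Spaces.linear sA sV (\<lambda>x. l x v))"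

definition bimodule :: "('k::field \<Rightarrow> 'a::ab_group_add \<Rightarrow> 'a) \<Rightarrow> ('a \<Rightarrow> 'a \<Rightarrow> 'a) \<Rightarrow> ('k \<Rightarrow> 'v::ab_group_add \<Rightarrow> 'v) \<Rightarrow> ('a \<Rightarrow> 'v \<Rightarrow> 'v) \<Rightarrow> ('a \<Rightarrow> 'v \<Rightarrow> 'v) \<Rightarrow> bool" where
  "bimodule sA m sV l r \<longleftrightarrow> vector_space sV \<and> linear_to_End sA sV l \<and> linear_to_End sA sV r \<and>
     (\<forall>x y. l x \<circ> l y = r y \<circ> r x \<and> l x \<circ> r y = l (m y x) \<and> r x \<circ> l y = r (m x y))"

definition sum_scale :: "('k \<Rightarrow> 'a \<Rightarrow> 'a) \<Rightarrow> ('k \<Rightarrow> 'b \<Rightarrow> 'b) \<Rightarrow> 'k \<Rightarrow> 'a \<times> 'b \<Rightarrow> 'a \<times> 'b" where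
  "sum_scale sA sB c p = (sA c (fst p), sB c (snd p))"

end

theory Submission
  imports Defs
begin

lemma lin_add: "Vector_Spaces.linear s1 s2 f \<Longrightarrow> f (x + y) = f x + f y"
  by (drule Vector_Spaces.linear_iff[THEN iffD1]) blast
lemma lin_scale: "Vector_Spaces.linear s1 s2 f \<Longrightarrow> f (s1 c x) = s2 c (f x)"
  by (drule Vector_Spaces.linear_iff[THEN iffD1]) blast

lemma vs_sum:
  assumes "vector_space sA" "vector_space sB"
  shows "vector_space (sum_scale sA sB)"
  using assms unfolding vector_space_def sum_scale_def by auto

theorem mainTheorem7:
  fixes sA :: "'k::field_char_0 \<Rightarrow> 'a::ab_group_add \<Rightarrow> 'a"
    and sB :: "'k \<Rightarrow> 'b::ab_group_add \<Rightarrow> 'b"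
    and mA :: "'a \<Rightarrow> 'a \<Rightarrow> 'a"
    and mB :: "'b \<Rightarrow> 'b \<Rightarrow> 'b"
    and lA rA :: "'a \<Rightarrow> 'b \<Rightarrow> 'b"
    and lB rB :: "'b \<Rightarrow> 'a \<Rightarrow> 'a"
  assumes A: "nearly_assoc_algebra sA mA"
    and B: "nearly_assoc_algebra sB mB"
    and bimA: "bimodule sA mA sB lA rA"
    and bimB: "bimodule sB mB sA lB rB"
    and c1: "\<And>x y a. rB (lA x a) y + mA y (rB a x) - mA (lB a y) x - lB (rA y a) x = 0"
    and c2: "\<And>x y a. rB a (mA x y) - mA y (lB a x) - rB (rA x a) y = 0"
    and c3: "\<And>x y a. lB a (mA x y) - mA (rB a y) x - lB (lA y a) x = 0"
    and c4: "\<And>x a b. rA (lB a x) b + mB b (rA x a) - mB (lA x b) a - lA (rB b x) a = 0"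
    and c5: "\<And>x a b. rA x (mB a b) - mB b (lA x a) - rA (rB a x) b = 0"
    and c6: "\<And>x a b. lA x (mB a b) - mB (rA x b) a - lA (lB b x) a = 0"
  shows "nearly_assoc_algebra (sum_scale sA sB)
           (\<lambda>(x, a) (y, b). (mA x y + lB a y + rB b x, mB a b + lA x b + rA y a))"
proof -
  have vA: "vector_space sA" and vB: "vector_space sB"
    and aA: "\<And>x y z. mA x (mA y z) = mA (mA z x) y"
    and aB: "\<And>x y z. mB x (mB y z) = mB (mB z x) y"
    and lmA1: "\<And>x. Vector_Spaces.linear sA sA (mA x)"
    and lmA2: "\<And>y. Vector_Spaces.linear sA sA (\<lambda>x. mA x y)"
    and lmB1: "\<And>x. Vector_Spaces.linear sB sB (mB x)"
    and lmB2: "\<And>y. Vector_Spaces.linear sB sB (\<lambda>x. mB x y)"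
    using A B unfolding nearly_assoc_algebra_def bilinear_op_def by auto
  have llA1: "\<And>x. Vector_Spaces.linear sB sB (lA x)"
    and llA2: "\<And>v. Vector_Spaces.linear sA sB (\<lambda>x. lA x v)"
    and lrA1: "\<And>x. Vector_Spaces.linear sB sB (rA x)"
    and lrA2: "\<And>v. Vector_Spaces.linear sA sB (\<lambda>x. rA x v)"
    and bA: "\<And>x y. lA x \<circ> lA y = rA y \<circ> rA x \<and> lA x \<circ> rA y = lA (mA y x) \<and> rA x \<circ> lA y = rA (mA x y)"
    using bimA unfolding bimodule_def linear_to_End_def by auto
  have llB1: "\<And>x. Vector_Spaces.linear sA sA (lB x)"
    and llB2: "\<And>v. Vector_Spaces.linear sB sA (\<lambda>x. lB x v)"
    and lrB1: "\<And>x. Vector_Spaces.linear sA sA (rB x)"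
    and lrB2: "\<And>v. Vector_Spaces.linear sB sA (\<lambda>x. rB x v)"
    and bB: "\<And>x y. lB x \<circ> lB y = rB y \<circ> rB x \<and> lB x \<circ> rB y = lB (mB y x) \<and> rB x \<circ> lB y = rB (mB x y)"
    using bimB unfolding bimodule_def linear_to_End_def by auto
  have bA1: "\<And>x y v. lA x (lA y v) = rA y (rA x v)"
    and bA2: "\<And>x y v. lA x (rA y v) = lA (mA y x) v"
    and bA3: "\<And>x y v. rA x (lA y v) = rA (mA x y) v"
    using bA by (metis comp_apply)+
  have bB1: "\<And>x y v. lB x (lB y v) = rB y (rB x v)"
    and bB2: "\<And>x y v. lB x (rB y v) = lB (mB y x) v"
    and bB3: "\<And>x y v. rB x (lB y v) = rB (mB x y) v"
    using bB by (metis comp_apply)+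
  note adds = lin_add[OF lmA1] lin_add[OF lmA2] lin_add[OF lmB1] lin_add[OF lmB2]
    lin_add[OF llA1] lin_add[OF llA2] lin_add[OF lrA1] lin_add[OF lrA2]
    lin_add[OF llB1] lin_add[OF llB2] lin_add[OF lrB1] lin_add[OF lrB2]
  note scales = lin_scale[OF lmA1] lin_scale[OF lmA2] lin_scale[OF lmB1] lin_scale[OF lmB2]
    lin_scale[OF llA1] lin_scale[OF llA2] lin_scale[OF lrA1] lin_scale[OF lrA2]
    lin_scale[OF llB1] lin_scale[OF llB2] lin_scale[OF lrB1] lin_scale[OF lrB2]
  have vS: "vector_space (sum_scale sA sB)" using vA vB by (rule vs_sum)
  have bil: "bilinear_op (sum_scale sA sB)
           (\<lambda>(x, a) (y, b). (mA x y + lB a y + rB b x, mB a b + lA x b + rA y a))"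
    unfolding bilinear_op_def
  proof (intro conjI allI)
    fix p :: "'a \<times> 'b"
    show "Vector_Spaces.linear (sum_scale sA sB) (sum_scale sA sB)
         ((\<lambda>(x, a) (y, b). (mA x y + lB a y + rB b x, mB a b + lA x b + rA y a)) p)"
      unfolding Vector_Spaces.linear_iff using vS
      by (simp add: sum_scale_def case_prod_unfold adds scales vector_space.vector_space_assms(1)[OF vA]
          vector_space.vector_space_assms(1)[OF vB] add_ac)
    show "Vector_Spaces.linear (sum_scale sA sB) (sum_scale sA sB)
         (\<lambda>q. (\<lambda>(x, a) (y, b). (mA x y + lB a y + rB b x, mB a b + lA x b + rA y a)) q p)"
      unfolding Vector_Spaces.linear_iff using vS
      by (simp add: sum_scale_def case_prod_unfold adds scales vector_space.vector_space_assms(1)[OF vA]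
          vector_space.vector_space_assms(1)[OF vB] add_ac)
  qed
  have assoc: "(\<lambda>(x, a) (y, b). (mA x y + lB a y + rB b x, mB a b + lA x b + rA y a)) p
     ((\<lambda>(x, a) (y, b). (mA x y + lB a y + rB b x, mB a b + lA x b + rA y a)) q r) =
     (\<lambda>(x, a) (y, b). (mA x y + lB a y + rB b x, mB a b + lA x b + rA y a))
     ((\<lambda>(x, a) (y, b). (mA x y + lB a y + rB b x, mB a b + lA x b + rA y a)) r p) q" for p q r
  proof -
    obtain x a where p: "p = (x, a)" by fastforce
    obtain y b where q: "q = (y, b)" by fastforce
    obtain z c where r: "r = (z, c)" by fastforce
    have e1: "rB (lA y c) x = mA (lB c x) y + lB (rA x c) y - mA x (rB c y)"
      using c1[of y c x] by (simp add: algebra_simps)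
    have e2: "rB b (mA z x) = mA x (lB b z) + rB (rA z b) x"
      using c2[of b z x] by (simp add: algebra_simps)
    have e3: "lB a (mA y z) = mA (rB a z) y + lB (lA z a) y"
      using c3[of a y z] by (simp add: algebra_simps)
    have f1: "rA (lB b z) a = mB (lA z a) b + lA (rB a z) b - mB a (rA z b)"
      using c4[where x=z and a=b and b=a] by (simp add: algebra_simps)
    have f2: "rA y (mB c a) = mB a (lA y c) + rA (rB c y) a"
      using c5[where x=y and a=c and b=a] by (simp add: algebra_simps)
    have f3: "lA x (mB b c) = mB (rA x c) b + lA (lB c x) b"
      using c6[where x=x and a=b and b=c] by (simp add: algebra_simps)
    show ?thesis unfolding p q r
      by (simp add: adds e1 e2 e3 f1 f2 f3 bA1 bA2 bA3 bB1 bB2 bB3 aA[of x] aB[of a] algebra_simps)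
  qed
  show ?thesis unfolding nearly_assoc_algebra_def using vS bil assoc by blast
qed

end
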